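(* There is a universal constant $C$ such that for all positive integers $k,n$, every $\epsilon\in(0,1)$, and every integer $g$, there is a $k$-party, one-round protocol using public randomness for the Sum-Equal problem over $\mathbb{Z}$ with $n$-bit inputs relative to $g$, with error at most $\epsilon$ and total communication complexity at most $k\log(k/\epsilon)+C\cdot k$.
   Context: Model: parties $P_1,\dots,P_k$ each hold an integer input $x_i\in\{0,\dots,2^n-1\}$; a coordinator (distinct from the parties) wants to compute $f(x_1,\dots,x_k)$. In a one-round protocol with public randomness, a random string $r$ is shared by all parties and the coordinator; each party sends a single message depending only on its own input and $r$; the coordinator outputs a value depending only on the messages and $r$; there is no other communication. Error at most $\epsilon$ means that for every input the probability over $r$ of a wrong output is at most $\epsilon$. Total communication complexity is the maximum total number of bits sent. Sum-Equal over $\mathbb{Z}$ relative to $g$: $f=1$ if $\sum_i x_i=g$ and $f=0$ otherwise. $\log$ is base 2. *)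

theory Defs
  imports "HOL-Probability.Probability"
begin

text \<open>The public random string is drawn from a discrete
  distribution R (a pmf on nat). Party i sends the bit string msg i (x i) r,
  depending only on its identity, its own input and r.\<close>

definition valid_input :: "nat \<Rightarrow> nat \<Rightarrow> (nat \<Rightarrow> int) \<Rightarrow> bool" where
  "valid_input k n x \<longleftrightarrow> (\<forall>i<k. 0 \<le> x i \<and> x i \<le> 2 ^ n - 1)"

definition sum_equal :: "nat \<Rightarrow> int \<Rightarrow> (nat \<Rightarrow> int) \<Rightarrow> bool" where
  "sum_equal k g x \<longleftrightarrow> (\<Sum>i<k. x i) = g"

definition protocol_output ::
  "nat \<Rightarrow> (nat \<Rightarrow> int \<Rightarrow> nat \<Rightarrow> bool list) \<Rightarrow> (bool list list \<Rightarrow> nat \<Rightarrow> bool)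
    \<Rightarrow> (nat \<Rightarrow> int) \<Rightarrow> nat \<Rightarrow> bool" where
  "protocol_output k msg out x r = out (map (\<lambda>i. msg i (x i) r) [0..<k]) r"

definition total_comm ::
  "nat \<Rightarrow> (nat \<Rightarrow> int \<Rightarrow> nat \<Rightarrow> bool list) \<Rightarrow> (nat \<Rightarrow> int) \<Rightarrow> nat \<Rightarrow> nat" where
  "total_comm k msg x r = (\<Sum>i<k. length (msg i (x i) r))"

definition sum_equal_protocol ::
  "nat \<Rightarrow> nat \<Rightarrow> int \<Rightarrow> real \<Rightarrow> real \<Rightarrow> nat pmf \<Rightarrow> (nat \<Rightarrow> int \<Rightarrow> nat \<Rightarrow> bool list)
     \<Rightarrow> (bool list list \<Rightarrow> nat \<Rightarrow> bool) \<Rightarrow> bool" where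
  "sum_equal_protocol k n g eps B R msg out \<longleftrightarrow>
     (\<forall>x. valid_input k n x \<longrightarrow>
        measure_pmf.prob R {r. protocol_output k msg out x r \<noteq> sum_equal k g x} \<le> eps) \<and>
     (\<forall>x. valid_input k n x \<longrightarrow> (\<forall>r\<in>set_pmf R. real (total_comm k msg x r) \<le> B))"

end

theory Submission
  imports Defs "HOL-Computational_Algebra.Primes"
begin


fun enc :: "nat \<Rightarrow> nat \<Rightarrow> bool list" where
  "enc 0 c = []"
| "enc (Suc t) c = odd c # enc t (c div 2)"

fun dec :: "bool list \<Rightarrow> nat" where
  "dec [] = 0"
| "dec (b # bs) = (if b then 1 else 0) + 2 * dec bs"

lemma length_enc[simp]: "length (enc t c) = t"
  by (induction t arbitrary: c) auto

lemma dec_enc: "dec (enc t c) = c mod 2 ^ t"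
proof (induction t arbitrary: c)
  case 0 then show ?case by simp
next
  case (Suc t)
  then show ?case by (simp add: mod_mult2_eq) presburger
qed

lemma arithA:
  fixes W Cs E T p k :: int
  assumes "T * W = p * Cs + E" "0 \<le> E" "E < k * p" "p > 0" "p dvd W"
  shows "\<exists>j\<in>{0..<k}. (Cs + j) mod T = 0"
proof -
  obtain m where m: "W = p * m" using assms(5) by blast
  have "p * (T * m - Cs) = E" using assms(1) m by (simp add: algebra_simps)
  hence "0 \<le> T*m - Cs" "T*m - Cs < k" using assms
    by (metis mult_less_cancel_left_pos zero_le_mult_iff order_less_le not_less mult.commute)+
  moreover have "(Cs + (T*m - Cs)) mod T = 0" by simp
  ultimately show ?thesis by (intro bexI[of _ "T*m-Cs"]) auto
qed

lemma arithB:
  fixes W Cs E T p k j :: int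
  assumes "T * W = p * Cs + E" "0 \<le> E" "E < k * p" "p > 0" "k \<le> T" "T > 0"
    "0 \<le> j" "j < k" "(Cs + j) mod T = 0"
  shows "T * (W mod p) < k * p \<or> T * (p - W mod p) < k * p"
proof -
  obtain q where q: "Cs + j = T * q" using assms(9) by (metis mod_eq_0_iff_dvd dvd_def)
  define v where "v = W mod p"
  define m where "m = W div p"
  have W: "W = p * m + v" unfolding v_def m_def by simp
  have v: "0 \<le> v" "v < p" using assms(4) unfolding v_def by auto
  define u where "u = E - p * j"
  have jp: "0 \<le> p * j" "p * j < p * k" using assms by auto
  have u: "u < k * p" "- (k*p) < u" unfolding u_def using assms(2,3) jp by (simp_all add: mult.commute)
  have kp: "k * p \<le> T * p" using assms by simp
  have eq: "T * v - u = p * T * (q - m)"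
  proof -
    have Cs: "Cs = T*q - j" using q by simp
    show ?thesis using assms(1) W unfolding u_def Cs by (simp add: algebra_simps)
  qed
  define s where "s = q - m"
  have Tv: "0 \<le> T * v" "T * v < T * p" using v assms(6) by auto
  have "p * T * (s + 1) > 0" using eq u Tv kp unfolding s_def by (simp add: algebra_simps)
  hence s1: "s + 1 > 0" using assms(4,6) by (metis mult_pos_pos zero_less_mult_pos)
  have "p * T * (2 - s) > 0" using eq u Tv kp unfolding s_def by (simp add: algebra_simps)
  hence s2: "2 - s > 0" using assms(4,6) by (metis mult_pos_pos zero_less_mult_pos)
  have "s = 0 \<or> s = 1" using s1 s2 by linarith
  thus ?thesis
  proof
    assume "s = 0"
    hence "T * v = u" using eq unfolding s_def by simp
    thus ?thesis using u unfolding v_def by simp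
  next
    assume "s = 1"
    hence "T * v = u + p * T" using eq unfolding s_def by simp
    hence "T * (p - v) = - u" by (simp add: algebra_simps)
    thus ?thesis using u unfolding v_def by simp
  qed
qed

lemma inj: fixes p :: nat and d :: int assumes "prime p" "\<not> int p dvd d"
  shows "inj_on (\<lambda>r::nat. (int r * d) mod int p) {0..<p}"
proof
  fix a b assume a: "a \<in> {0..<p}" and b: "b \<in> {0..<p}" and e: "(int a * d) mod int p = (int b * d) mod int p"
  have "int p dvd (int a - int b) * d" using e by (metis mod_eq_dvd_iff left_diff_distrib)
  hence "int p dvd (int a - int b)" using assms by (simp add: prime_dvd_mult_iff)
  show "a = b"
  proof (rule ccontr)
    assume "a \<noteq> b"
    hence "\<bar>int p\<bar> \<le> \<bar>int a - int b\<bar>" using dvd_imp_le_int[OF _ \<open>int p dvd (int a - int b)\<close>] by simp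
    thus False using a b by auto
  qed
qed

lemma bad_card:
  fixes P k T :: int
  assumes "T > 0" "k \<ge> 0" "P > 0"
  shows "real (card {v. v \<in> {0..<P} \<and> (T * v < k*P \<or> T*(P-v) < k*P)}) \<le> 2 * (real_of_int (k*P) / T + 1)"
proof -
  define M where "M = k*P div T"
  have M0: "M \<ge> 0" unfolding M_def using assms by (simp add: pos_imp_zdiv_nonneg_iff)
  have sub: "{v. v \<in> {0..<P} \<and> (T * v < k*P \<or> T*(P-v) < k*P)} \<subseteq> {0..M} \<union> (\<lambda>u. P-u) ` {0..M}"
  proof
    fix v assume "v \<in> {v. v \<in> {0..<P} \<and> (T * v < k*P \<or> T*(P-v) < k*P)}"
    hence v: "0 \<le> v" "v < P" "T * v < k*P \<or> T*(P-v) < k*P" by auto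
    show "v \<in> {0..M} \<union> (\<lambda>u. P-u) ` {0..M}"
    proof (cases "T * v < k*P")
      case True
      have "v = (T * v) div T" using assms by simp
      also have "\<dots> \<le> M" unfolding M_def using True assms by (intro zdiv_mono1) auto
      finally show ?thesis using v by (intro UnI1) simp
    next
      case False
      hence F: "T*(P-v) < k*P" using v by auto
      have "P - v = (T*(P-v)) div T" using assms by simp
      also have "\<dots> \<le> M" unfolding M_def using F assms by (intro zdiv_mono1) auto
      finally have "P - v \<in> {0..M}" using v by simp
      hence "P - (P - v) \<in> (\<lambda>u. P-u) ` {0..M}" by blast
      thus ?thesis by simp
    qed
  qed
  have "card {v. v \<in> {0..<P} \<and> (T * v < k*P \<or> T*(P-v) < k*P)} \<le> card ({0..M} \<union> (\<lambda>u. P-u) ` {0..M})"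
    by (intro card_mono sub) simp
  also have "\<dots> \<le> card {0..M} + card ((\<lambda>u. P-u) ` {0..M})" by (rule card_Un_le)
  also have "\<dots> \<le> card {0..M} + card {0..M}" using card_image_le[of "{0..M}" "\<lambda>u. P-u"] by simp
  finally have c: "card {v. v \<in> {0..<P} \<and> (T * v < k*P \<or> T*(P-v) < k*P)} \<le> 2 * nat (M + 1)" by simp
  have "real_of_int M \<le> real_of_int (k*P) / T" unfolding M_def by (rule real_of_int_div4)
  hence h1: "2 * real (nat (M+1)) \<le> 2 * (real_of_int (k*P) / T + 1)" using M0 by simp
  have h2: "real (card {v. v \<in> {0..<P} \<and> (T * v < k*P \<or> T*(P-v) < k*P)}) \<le> 2 * real (nat (M + 1))"
    using of_nat_mono[OF c, where 'a=real] by simp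
  show ?thesis using order_trans[OF h2 h1] .
qed


lemma bad_prob:
  fixes p :: nat and d k T :: int
  assumes "prime p" "\<not> int p dvd d" "T > 0" "k \<ge> 0"
  shows "measure_pmf.prob (pmf_of_set {0..<p})
     {r. T * ((int r * d) mod int p) < k*p \<or> T * (p - (int r * d) mod int p) < k*p}
     \<le> 2 * (real_of_int (k*p) / T + 1) / p"
proof -
  have p0: "p > 0" using assms(1) prime_gt_0_nat by blast
  define f where "f = (\<lambda>r::nat. (int r * d) mod int p)"
  define A where "A = {r. T * ((int r * d) mod int p) < k*p \<or> T * (p - (int r * d) mod int p) < k*p}"
  define B where "B = {v. v \<in> {0..<int p} \<and> (T * v < k*int p \<or> T*(int p-v) < k*int p)}"
  have inj: "inj_on f ({0..<p} \<inter> A)" unfolding f_def by (rule inj_on_subset[OF inj[OF assms(1,2)]]) simp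
  have sub: "f ` ({0..<p} \<inter> A) \<subseteq> B"
  proof
    fix v assume "v \<in> f ` ({0..<p} \<inter> A)"
    then obtain r where r: "r \<in> A" "v = f r" by blast
    have "0 \<le> v" "v < int p" using p0 unfolding r(2) f_def by simp_all
    thus "v \<in> B" using r unfolding B_def A_def f_def by simp
  qed
  have fin: "finite B" unfolding B_def by (rule finite_subset[of _ "{0..<int p}"]) auto
  have "card ({0..<p} \<inter> A) = card (f ` ({0..<p} \<inter> A))" using card_image[OF inj] by simp
  also have "\<dots> \<le> card B" using card_mono[OF fin sub] .
  finally have c: "card ({0..<p} \<inter> A) \<le> card B" .
  have "real (card B) \<le> 2 * (real_of_int (k*p) / T + 1)"
    unfolding B_def using bad_card[of T k "int p"] assms p0 by simp
  hence cc: "real (card ({0..<p} \<inter> A)) \<le> 2 * (real_of_int (k*p) / T + 1)"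
    using of_nat_mono[OF c, where 'a=real] by linarith
  have "measure_pmf.prob (pmf_of_set {0..<p}) A = real (card ({0..<p} \<inter> A)) / real p"
    using p0 by (subst measure_pmf_of_set) auto
  also have "\<dots> \<le> 2 * (real_of_int (k*p) / T + 1) / p" using cc p0 by (simp add: divide_right_mono)
  finally show ?thesis unfolding A_def .
qed

lemma core:
  fixes k n :: nat and eps :: real and g :: int
  assumes k: "0 < k" and e0: "0 < eps" and e1: "eps < 1"
  shows "\<exists>R msg out. sum_equal_protocol k n g eps
                (real k * log 2 (real k / eps) + 3 * real k) R msg out"
proof -
  define t :: nat where "t = nat \<lceil>log 2 (4 * real k / eps)\<rceil>"
  define T :: int where "T = 2 ^ t"
  define N :: nat where "N = nat (int k * 2 ^ n + \<bar>g\<bar>) + nat \<lceil>4 / eps\<rceil>"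
  obtain p :: nat where p: "prime p" "N < p" using bigger_prime by blast
  have p0: "p > 0" using p(1) prime_gt_0_nat by blast
  have kf: "4 * real k / eps > 1"
  proof -
    have "4 * real k / eps > 4 * real k" using k e0 e1 by (simp add: less_divide_eq)
    thus ?thesis using k by linarith
  qed
  have lpos: "log 2 (4 * real k / eps) > 0" using kf by simp
  have rt: "real t = of_int \<lceil>log 2 (4 * real k / eps)\<rceil>" unfolding t_def using lpos by simp
  have Tbig: "real_of_int T \<ge> 4 * real k / eps"
  proof -
    have "4 * real k / eps = 2 powr (log 2 (4 * real k / eps))" using kf by simp
    also have "\<dots> \<le> 2 powr (real t)" unfolding rt by simp
    also have "\<dots> = real_of_int T" unfolding T_def by (simp add: powr_realpow)
    finally show ?thesis .
  qed
  have T0: "T > 0" unfolding T_def by simp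
  have kT: "int k \<le> T"
  proof -
    have "4 * real k / eps \<ge> real k" using k e0 e1
      by (simp add: le_divide_eq)
    hence "real k \<le> real_of_int T" using Tbig by linarith
    thus ?thesis by linarith
  qed
  define y :: "nat \<Rightarrow> int \<Rightarrow> int" where "y = (\<lambda>i v. if i = 0 then v - g else v)"
  define wf :: "nat \<Rightarrow> int \<Rightarrow> nat \<Rightarrow> int" where "wf = (\<lambda>i v r. (int r * y i v) mod int p)"
  define cf :: "nat \<Rightarrow> int \<Rightarrow> nat \<Rightarrow> int" where "cf = (\<lambda>i v r. wf i v r * T div int p)"
  define msg where "msg = (\<lambda>i v r. enc t (nat (cf i v r)))"
  define out where "out = (\<lambda>ms (r::nat). \<exists>j\<in>{0..<int k}. (int (sum_list (map dec ms)) + j) mod T = 0)"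
  define R where "R = pmf_of_set {0..<p}"
  have w_bounds: "0 \<le> wf i v r" "wf i v r < int p" for i v r unfolding wf_def using p0 by auto
  have c_bounds: "0 \<le> cf i v r" "cf i v r < T" for i v r
  proof -
    show "0 \<le> cf i v r" unfolding cf_def using w_bounds[of i v r] T0 p0 by (simp add: pos_imp_zdiv_nonneg_iff)
    have "wf i v r * T < int p * T" using w_bounds[of i v r] T0 by simp
    moreover have "cf i v r * int p \<le> wf i v r * T"
    proof -
      have "cf i v r * int p = wf i v r * T - wf i v r * T mod int p" unfolding cf_def
        by (simp add: minus_mod_eq_div_mult)
      moreover have "wf i v r * T mod int p \<ge> 0" using p0 by simp
      ultimately show ?thesis by linarith
    qed
    ultimately have "cf i v r * int p < T * int p" by (simp add: mult.commute)
    thus "cf i v r < T" using p0 by simp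
  qed
  have dec_msg: "int (dec (msg i v r)) = cf i v r" for i v r
  proof -
    have "nat (cf i v r) < 2 ^ t" using c_bounds[of i v r] unfolding T_def
      by (simp add: nat_less_iff)
    thus ?thesis unfolding msg_def dec_enc using c_bounds[of i v r] by simp
  qed
  have outeq: "protocol_output k msg out x r \<longleftrightarrow>
      (\<exists>j\<in>{0..<int k}. ((\<Sum>i<k. cf i (x i) r) + j) mod T = 0)" for x r
  proof -
    have "int (sum_list (map dec (map (\<lambda>i. msg i (x i) r) [0..<k]))) = (\<Sum>i<k. cf i (x i) r)"
      by (simp add: interv_sum_list_conv_sum_set_nat atLeast0LessThan dec_msg o_def)
    thus ?thesis unfolding protocol_output_def out_def by simp
  qed
  have key: "T * (\<Sum>i<k. wf i (x i) r) = int p * (\<Sum>i<k. cf i (x i) r) + (\<Sum>i<k. wf i (x i) r * T mod int p)"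
    "0 \<le> (\<Sum>i<k. wf i (x i) r * T mod int p)" "(\<Sum>i<k. wf i (x i) r * T mod int p) < int k * int p"
    for x r
  proof -
    have "T * (\<Sum>i<k. wf i (x i) r) = (\<Sum>i<k. wf i (x i) r * T)" by (simp add: sum_distrib_left mult.commute)
    also have "\<dots> = (\<Sum>i<k. int p * cf i (x i) r + wf i (x i) r * T mod int p)"
      unfolding cf_def by (intro sum.cong refl) simp
    also have "\<dots> = int p * (\<Sum>i<k. cf i (x i) r) + (\<Sum>i<k. wf i (x i) r * T mod int p)"
      by (simp add: sum.distrib sum_distrib_left)
    finally show "T * (\<Sum>i<k. wf i (x i) r) = int p * (\<Sum>i<k. cf i (x i) r) + (\<Sum>i<k. wf i (x i) r * T mod int p)" .
    show "0 \<le> (\<Sum>i<k. wf i (x i) r * T mod int p)" using p0 by (intro sum_nonneg) simp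
    have "(\<Sum>i<k. wf i (x i) r * T mod int p) < (\<Sum>i<k. int p)"
      using k p0 by (intro sum_strict_mono) auto
    thus "(\<Sum>i<k. wf i (x i) r * T mod int p) < int k * int p" by simp
  qed
  have Wmod: "(\<Sum>i<k. wf i (x i) r) mod int p = (int r * ((\<Sum>i<k. x i) - g)) mod int p" for x r
  proof -
    have "(\<Sum>i<k. y i (x i)) = (\<Sum>i<k. x i - (if i = 0 then g else 0))"
      unfolding y_def by (intro sum.cong) auto
    also have "\<dots> = (\<Sum>i<k. x i) - g" using k by (simp add: sum_subtractf)
    finally have ys: "(\<Sum>i<k. y i (x i)) = (\<Sum>i<k. x i) - g" .
    have "(\<Sum>i<k. wf i (x i) r) mod int p = (\<Sum>i<k. int r * y i (x i)) mod int p"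
      unfolding wf_def by (rule mod_sum_eq)
    also have "\<dots> = (int r * ((\<Sum>i<k. x i) - g)) mod int p" by (simp add: sum_distrib_left[symmetric] ys)
    finally show ?thesis .
  qed
  have err: "measure_pmf.prob R {r. protocol_output k msg out x r \<noteq> sum_equal k g x} \<le> eps"
    if vx: "valid_input k n x" for x
  proof (cases "sum_equal k g x")
    case True
    have "{r. protocol_output k msg out x r \<noteq> sum_equal k g x} = {}"
    proof -
      have "protocol_output k msg out x r" for r
      proof -
        have "(\<Sum>i<k. x i) - g = 0" using True unfolding sum_equal_def by simp
        hence dv: "int p dvd (\<Sum>i<k. wf i (x i) r)" using Wmod[of x r] by (simp add: mod_eq_0_iff_dvd)
        have pp: "int p > 0" using p0 by simp
        from arithA[OF key(1)[of x r] key(2)[of x r] key(3)[of x r] pp dv]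
        show ?thesis unfolding outeq .
      qed
      thus ?thesis using True by simp
    qed
    thus ?thesis using e0 by simp
  next
    case False
    define D where "D = (\<Sum>i<k. x i) - g"
    have D0: "D \<noteq> 0" using False unfolding sum_equal_def D_def by simp
    have S1: "(\<Sum>i<k. x i) \<le> of_nat (card {..<k}) * (2 ^ n - 1)"
      using vx unfolding valid_input_def by (intro sum_bounded_above) auto
    have S0: "(\<Sum>i<k. x i) \<ge> 0" using vx unfolding valid_input_def by (intro sum_nonneg) auto
    have S2: "(\<Sum>i<k. x i) \<le> int k * 2 ^ n" using S1 by (simp add: right_diff_distrib)
    have "\<bar>D\<bar> \<le> \<bar>\<Sum>i<k. x i\<bar> + \<bar>g\<bar>" unfolding D_def by (rule abs_triangle_ineq4)
    hence Db: "\<bar>D\<bar> < int k * 2 ^ n + \<bar>g\<bar> + 1" using S0 S2 by linarith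

    have "int k * 2 ^ n + \<bar>g\<bar> + 1 \<le> int p" using p(2) unfolding N_def by linarith
    hence "\<bar>D\<bar> < int p" using Db by linarith
    hence ndvd: "\<not> int p dvd D" using dvd_imp_le_int[OF D0] by force
    have sub: "{r. protocol_output k msg out x r \<noteq> sum_equal k g x} \<subseteq>
       {r. T * ((int r * D) mod int p) < int k * int p \<or> T * (int p - (int r * D) mod int p) < int k * int p}"
    proof
      fix r assume "r \<in> {r. protocol_output k msg out x r \<noteq> sum_equal k g x}"
      hence "protocol_output k msg out x r" using False by simp
      hence "\<exists>j\<in>{0..<int k}. ((\<Sum>i<k. cf i (x i) r) + j) mod T = 0" by (rule outeq[THEN iffD1])
      then obtain j where j: "j \<in> {0..<int k}" "((\<Sum>i<k. cf i (x i) r) + j) mod T = 0" by (elim bexE)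
      have jj: "0 \<le> j" "j < int k" using j(1) by auto
      have pp: "int p > 0" using p0 by simp
      have "T * ((\<Sum>i<k. wf i (x i) r) mod int p) < int k * int p \<or>
            T * (int p - (\<Sum>i<k. wf i (x i) r) mod int p) < int k * int p"
        using arithB[OF key(1)[of x r] key(2)[of x r] key(3)[of x r] pp kT T0 jj j(2)] .
      moreover have "(\<Sum>i<k. wf i (x i) r) mod int p = (int r * D) mod int p" using Wmod[of x r] unfolding D_def .
      ultimately show "r \<in> {r. T * ((int r * D) mod int p) < int k * int p \<or> T * (int p - (int r * D) mod int p) < int k * int p}"
        by (simp only: mem_Collect_eq)
    qed
    have "measure_pmf.prob R {r. protocol_output k msg out x r \<noteq> sum_equal k g x}
        \<le> measure_pmf.prob R {r. T * ((int r * D) mod int p) < int k * int p \<or> T * (int p - (int r * D) mod int p) < int k * int p}"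
      by (rule measure_pmf.finite_measure_mono[OF sub]) simp
    also have "\<dots> \<le> 2 * (real_of_int (int k * int p) / T + 1) / p"
      unfolding R_def using bad_prob[OF p(1) ndvd T0, of "int k"] by simp
    also have "\<dots> = 2 * real k / T + 2 / p" using p0 by (simp add: field_simps)
    also have "\<dots> \<le> eps / 2 + eps / 2"
    proof (rule add_mono)
      have "2 * real k / T \<le> 2 * real k / (4 * real k / eps)"
      proof (rule divide_left_mono[OF Tbig])
        have "0 < 4 * real k / eps" using k e0 by simp
        moreover have "0 < real_of_int T" using T0 by simp
        ultimately show "0 < real_of_int T * (4 * real k / eps)" by (rule mult_pos_pos[rotated])
      qed simp
      also have "\<dots> = eps / 2" using k e0 by (simp add: field_simps)
      finally show "2 * real k / T \<le> eps / 2" .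
      have "real p \<ge> 4 / eps" using p(2) unfolding N_def by linarith
      hence "2 / real p \<le> 2 / (4 / eps)" using e0 p0 by (intro divide_left_mono) simp_all
      also have "\<dots> = eps / 2" by simp
      finally show "2 / real p \<le> eps / 2" .
    qed
    finally show ?thesis by simp
  qed
  have comm: "real (total_comm k msg x r) \<le> real k * log 2 (real k / eps) + 3 * real k" for x r
  proof -
    have "total_comm k msg x r = k * t" unfolding total_comm_def msg_def by simp
    have "real t \<le> log 2 (4 * real k / eps) + 1" unfolding rt by linarith
    also have "log 2 (4 * real k / eps) = log 2 4 + log 2 (real k / eps)"
    proof -
      have "4 * real k / eps = 4 * (real k / eps)" by simp
      moreover have "real k / eps \<noteq> 0" using k e0 by simp
      ultimately show ?thesis by (simp only: log_mult) simp
    qed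
    also have "log 2 (4::real) = 2"
      using log_pow_cancel[of "2::real" 2] by simp
    finally have "real t \<le> log 2 (real k / eps) + 3" by simp
    hence "real k * real t \<le> real k * (log 2 (real k / eps) + 3)" by (intro mult_left_mono) auto
    thus ?thesis using \<open>total_comm k msg x r = k * t\<close> by (simp add: algebra_simps)
  qed
  show ?thesis unfolding sum_equal_protocol_def using err comm by blast
qed


theorem mainTheorem11:
  shows "\<exists>C::real. \<forall>(k::nat) (n::nat) (eps::real) (g::int).
           0 < k \<longrightarrow> 0 < n \<longrightarrow> 0 < eps \<longrightarrow> eps < 1 \<longrightarrow>
           (\<exists>R msg out. sum_equal_protocol k n g eps
                (real k * log 2 (real k / eps) + C * real k) R msg out)"
  using core by blast

end
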